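(* Let $k\ge2$ and set $z_{cr}=-\log\sigma+c_0\langle\sigma,\log\sigma\rangle\mathbf 1\in\Pi$. (i) For any $R>0$ and any $\epsilon>0$ small enough there exists $\eta=\eta(R,\epsilon)>0$ such that for all $z\in\Pi$ and $b\in\mathbb R^{k-1}$ with $|z|\le R$ and $|z-z_{cr}|+\min(|\cos b-\mathbf 1|,|\cos b+\mathbf 1|)\ge\epsilon$, one has $$|P_\sigma(\cos b\,e^{-z})|+|\sin b\,e^{-z}|\ge\eta.$$ (ii) There exist $\epsilon_0>0$ and $C>0$ such that for all $z\in\Pi$ and $b\in\mathbb R^{k-1}$ with $|z-z_{cr}|+|b-\pi\mathbf 1|\le\epsilon_0$, $$|P_\sigma(\cos b\,e^{-z})|+|\sin b\,e^{-z}|\ge C^{-1}\big(|z-z_{cr}|+|b-\pi\mathbf 1|\big).$$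
   Context: $\langle\cdot,\cdot\rangle$ and $|\cdot|$ are the Euclidean inner product and norm on $\mathbb R^{k-1}$; functions such as $\cos b$, $\sin b$, $e^{-z}$, $\log\sigma$ act componentwise, and $\cos b\,e^{-z}$ denotes the vector with components $\cos b_j\,e^{-z_j}$. $\mathbf 1=(1,\dots,1)$, $\sigma_j=\frac{j(k-j)}2$ for $j=1,\dots,k-1$, $c_0=1/\langle\sigma,\mathbf 1\rangle$, $\Pi=\{v\in\mathbb R^{k-1}:\langle\sigma,v\rangle=0\}$, and $P_\sigma v=v-\frac{\langle\sigma,v\rangle}{|\sigma|^2}\sigma$. *)

theory Defs
  imports "HOL-Analysis.Analysis"
begin

text \<open>Vectors in R^(k-1) are represented as functions nat => real; only the
components with index j in {1..<k} (i.e. j = 1..k-1) matter.\<close>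

definition vinner :: "nat \<Rightarrow> (nat \<Rightarrow> real) \<Rightarrow> (nat \<Rightarrow> real) \<Rightarrow> real" where
  "vinner k u v = (\<Sum>j\<in>{1..<k}. u j * v j)"

definition vnorm :: "nat \<Rightarrow> (nat \<Rightarrow> real) \<Rightarrow> real" where
  "vnorm k v = sqrt (vinner k v v)"

definition sigma :: "nat \<Rightarrow> nat \<Rightarrow> real" where
  "sigma k j = real j * (real k - real j) / 2"

definition c0 :: "nat \<Rightarrow> real" where
  "c0 k = 1 / vinner k (sigma k) (\<lambda>_. 1)"

definition PiSet :: "nat \<Rightarrow> (nat \<Rightarrow> real) set" where
  "PiSet k = {v. vinner k (sigma k) v = 0}"

definition Psigma :: "nat \<Rightarrow> (nat \<Rightarrow> real) \<Rightarrow> (nat \<Rightarrow> real)" where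
  "Psigma k v = (\<lambda>j. v j - vinner k (sigma k) v / (vnorm k (sigma k))\<^sup>2 * sigma k j)"

definition zcr :: "nat \<Rightarrow> nat \<Rightarrow> real" where
  "zcr k = (\<lambda>j. - ln (sigma k j) + c0 k * vinner k (sigma k) (\<lambda>i. ln (sigma k i)))"

definition Fq :: "nat \<Rightarrow> (nat \<Rightarrow> real) \<Rightarrow> (nat \<Rightarrow> real) \<Rightarrow> real" where
  "Fq k z b = vnorm k (Psigma k (\<lambda>j. cos (b j) * exp (- z j)))
            + vnorm k (\<lambda>j. sin (b j) * exp (- z j))"

end

theory Submission
  imports Defs
begin


lemma vnorm_L2: "vnorm k v = L2_set v {1..<k}"
  by (simp add: vnorm_def vinner_def L2_set_def power2_eq_square)

lemma vnorm_nonneg: "vnorm k v \<ge> 0"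
  by (simp add: vnorm_L2)

lemma vnorm_abs: "vnorm k (\<lambda>j. \<bar>v j\<bar>) = vnorm k v"
  by (simp add: vnorm_L2 L2_set_def)

lemma vnorm_mono:
  assumes "\<And>j. j \<in> {1..<k} \<Longrightarrow> \<bar>u j\<bar> \<le> \<bar>v j\<bar>"
  shows "vnorm k u \<le> vnorm k v"
proof -
  have "L2_set (\<lambda>j. \<bar>u j\<bar>) {1..<k} \<le> L2_set (\<lambda>j. \<bar>v j\<bar>) {1..<k}"
    by (rule L2_set_mono) (use assms in auto)
  thus ?thesis by (metis vnorm_abs vnorm_L2)
qed

lemma vnorm_scale: "vnorm k (\<lambda>j. c * v j) = \<bar>c\<bar> * vnorm k v"
  by (simp add: vnorm_L2 L2_set_def power_mult_distrib sum_distrib_left[symmetric] real_sqrt_mult)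

lemma vnorm_tri: "vnorm k (\<lambda>j. u j + v j) \<le> vnorm k u + vnorm k v"
  unfolding vnorm_L2 by (rule L2_set_triangle_ineq)

lemma vnorm_comp: assumes "j \<in> {1..<k}" shows "\<bar>v j\<bar> \<le> vnorm k v"
proof -
  have "\<bar>v j\<bar> \<le> L2_set (\<lambda>j. \<bar>v j\<bar>) {1..<k}" by (rule member_le_L2_set) (use assms in auto)
  also have "\<dots> = vnorm k (\<lambda>j. \<bar>v j\<bar>)" by (simp only: vnorm_L2)
  also have "\<dots> = vnorm k v" by (rule vnorm_abs)
  finally show ?thesis .
qed

lemma vnorm_le:
  assumes "\<And>j. j \<in> {1..<k} \<Longrightarrow> \<bar>v j\<bar> \<le> M" "M \<ge> 0" "k \<ge> 1"
  shows "vnorm k v \<le> sqrt (real k - 1) * M"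
proof -
  have "vnorm k v \<le> vnorm k (\<lambda>j. M)"
    by (rule vnorm_mono) (use assms in auto)
  also have "\<dots> = sqrt (real k - 1) * M"
    using assms by (simp add: vnorm_L2 L2_set_constant of_nat_diff)
  finally show ?thesis .
qed

lemma vnorm_sq: "(vnorm k v)^2 = (\<Sum>j\<in>{1..<k}. (v j)^2)"
  by (simp add: vnorm_L2 L2_set_def sum_nonneg)

lemma lin_aux1: "(c::real) = 1 - 2 * a \<Longrightarrow> a \<le> b \<Longrightarrow> b \<le> 1/4 \<Longrightarrow> 1/2 \<le> c" by linarith

lemma cosb: fixes y :: real assumes "\<bar>y\<bar> \<le> 1" shows "cos y \<ge> 1/2"
proof (rule lin_aux1)
  show "cos y = 1 - 2 * (sin (y/2))^2" using cos_double_sin[of "y/2"] by simp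
  have "\<bar>sin (y/2)\<bar> \<le> \<bar>y/2\<bar>" by (rule abs_sin_x_le_abs_x)
  then have "\<bar>sin (y/2)\<bar>^2 \<le> \<bar>y/2\<bar>^2" by (rule power_mono) simp
  then show "(sin (y/2))^2 \<le> (y/2)^2" by (simp only: power2_abs)
  have "\<bar>y/2\<bar> \<le> 1/2" using assms by simp
  then have "\<bar>y/2\<bar>^2 \<le> (1/2)^2" by (intro power_mono) auto
  also have "(1/2::real)^2 = 1/4" by (simp add: power_divide)
  finally show "(y/2)^2 \<le> 1/4" by (simp only: power2_abs)
qed

lemma sin_lower: fixes x :: real assumes "\<bar>x\<bar> \<le> 1" shows "\<bar>x\<bar> / 3 \<le> \<bar>sin x\<bar>"
proof -
  have mono: "sin x - x/3 \<ge> 0" if "0 \<le> x" "x \<le> 1" for x :: real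
  proof (cases "x = 0")
    case True thus ?thesis by simp
  next
    case False
    have "(\<lambda>t. sin t - t/3) 0 < (\<lambda>t. sin t - t/3) x"
    proof (rule DERIV_pos_imp_increasing[of 0 x "\<lambda>t. sin t - t/3"])
      show "0 < x" using False that by simp
      fix t assume t: "0 \<le> t" "t \<le> x"
      have "\<bar>t\<bar> \<le> 1" using t that by linarith
      then have "cos t \<ge> 1/2" by (rule cosb)
      have d: "DERIV (\<lambda>t. sin t - t/3) t :> cos t - 1/3"
        by (rule DERIV_diff[OF DERIV_sin DERIV_cdivide[OF DERIV_ident]])
      have "0 < cos t - 1/3" using \<open>cos t \<ge> 1/2\<close> by linarith
      with d show "\<exists>y. DERIV (\<lambda>t. sin t - t / 3) t :> y \<and> 0 < y" by blast
    qed
    thus ?thesis by simp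
  qed
  show ?thesis
  proof (cases "x \<ge> 0")
    case True
    have "\<bar>x\<bar> \<le> 1" by (rule assms)
    then have "x \<le> 1" by simp
    then have "0 \<le> sin x - x/3" using mono[of x] True by simp
    then have "x/3 \<le> sin x" by simp
    moreover have "sin x \<le> \<bar>sin x\<bar>" by simp
    ultimately show ?thesis using True by simp
  next
    case False
    have "\<bar>x\<bar> \<le> 1" by (rule assms)
    then have "-x \<le> 1" by simp
    then have "0 \<le> sin (-x) - (-x)/3" using mono[of "-x"] False by simp
    then have "(-x)/3 \<le> - sin x" by simp
    moreover have "- sin x \<le> \<bar>sin x\<bar>" by simp
    ultimately show ?thesis using False by simp
  qed
qed



definition Lk :: "nat \<Rightarrow> real" where
  "Lk k = c0 k * vinner k (sigma k) (\<lambda>i. ln (sigma k i))"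

lemma sigma_ge: assumes "j \<in> {1..<k}" shows "sigma k j \<ge> 1/2"
proof -
  have "real j \<ge> 1" "real k - real j \<ge> 1" using assms by auto
  then have "1 * 1 \<le> real j * (real k - real j)" by (intro mult_mono) auto
  thus ?thesis by (simp add: sigma_def)
qed

lemma sigma_le: assumes "j \<in> {1..<k}" shows "sigma k j \<le> (real k)^2"
proof -
  have "real j \<le> real k" "real k - real j \<le> real k" "real j \<ge> 0" "real k - real j \<ge> 0" using assms by auto
  then have "real j * (real k - real j) \<le> real k * real k" by (intro mult_mono) auto
  moreover have "real k * real k \<ge> 0" by simp
  ultimately show ?thesis unfolding sigma_def power2_eq_square by linarith
qed

lemma sigma_sum_pos: assumes "k \<ge> 2" shows "vinner k (sigma k) (\<lambda>_. 1) > 0"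
proof -
  have "(\<Sum>j\<in>{1..<k}. sigma k j) > 0"
    by (rule sum_pos) (use assms sigma_ge in \<open>auto intro: less_le_trans[of 0 "1/2"]\<close>)
  thus ?thesis by (simp add: vinner_def)
qed

lemma zcr_in: assumes "k \<ge> 2" shows "vinner k (sigma k) (zcr k) = 0"
proof -
  define S1 where "S1 = vinner k (sigma k) (\<lambda>_. 1)"
  define Sl where "Sl = vinner k (sigma k) (\<lambda>i. ln (sigma k i))"
  have S1: "S1 > 0" using sigma_sum_pos[OF assms] by (simp add: S1_def)
  have ze: "zcr k = (\<lambda>j. - ln (sigma k j) + c0 k * Sl)"
    by (rule ext) (simp add: zcr_def Sl_def)
  have "vinner k (sigma k) (zcr k) = (\<Sum>j\<in>{1..<k}. - (sigma k j * ln (sigma k j)) + sigma k j * (c0 k * Sl))"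
    unfolding vinner_def ze by (intro sum.cong refl) (simp add: algebra_simps)
  also have "\<dots> = (\<Sum>j\<in>{1..<k}. - (sigma k j * ln (sigma k j))) + (\<Sum>j\<in>{1..<k}. sigma k j * (c0 k * Sl))"
    by (rule sum.distrib)
  also have "\<dots> = - Sl + S1 * (c0 k * Sl)"
    by (simp add: sum_negf sum_distrib_right[symmetric] Sl_def S1_def vinner_def)
  also have "\<dots> = 0" using S1 by (simp add: c0_def S1_def[symmetric])
  finally show ?thesis .
qed

lemma exp_decomp: assumes "j \<in> {1..<k}"
  shows "exp (- z j) = exp (- Lk k) * sigma k j * exp (- (z j - zcr k j))"
proof -
  have sp: "sigma k j > 0" using sigma_ge[OF assms] by linarith
  have "- z j = ln (sigma k j) + (- Lk k) + (- (z j - zcr k j))"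
    by (simp add: zcr_def Lk_def)
  then have "exp (- z j) = exp (ln (sigma k j) + (- Lk k) + (- (z j - zcr k j)))"
    by (rule arg_cong[where f=exp])
  also have "\<dots> = exp (ln (sigma k j)) * exp (- Lk k) * exp (- (z j - zcr k j))"
    by (simp only: exp_add)
  finally have "exp (- z j) = exp (ln (sigma k j)) * exp (- Lk k) * exp (- (z j - zcr k j))" .
  thus ?thesis using sp by simp
qed

lemma expdiff1: fixes x y D :: real assumes "x \<le> y" "\<bar>y\<bar> \<le> D" shows "exp (-D) * (y - x) \<le> exp (-x) - exp (-y)"
proof -
  have e: "exp (-y) * exp (y-x) = exp (-x)" using exp_add[of "-y" "y-x", symmetric] by simp
  have "exp (-x) - exp (-y) = exp (-y) * (exp (y - x) - 1)"
    by (simp add: right_diff_distrib e)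
  moreover have "y - x \<le> exp (y - x) - 1" using exp_ge_add_one_self[of "y - x"] by linarith
  moreover have "exp (-D) \<le> exp (-y)" using assms by simp
  ultimately show ?thesis using assms(1)
    by (metis mult_mono exp_ge_zero diff_ge_0_iff_ge order_trans)
qed

lemma expdiff: fixes x y D :: real assumes "\<bar>x\<bar> \<le> D" "\<bar>y\<bar> \<le> D" shows "exp (-D) * \<bar>x - y\<bar> \<le> \<bar>exp (-x) - exp (-y)\<bar>"
proof (cases "x \<le> y")
  case True
  have "exp (-D) * (y - x) \<le> exp (-x) - exp (-y)" using expdiff1[OF True assms(2)] .
  moreover have "exp (-x) \<ge> exp (-y)" using True by simp
  ultimately show ?thesis using True by (simp add: abs_if)
next
  case False
  have "exp (-D) * (x - y) \<le> exp (-y) - exp (-x)" using expdiff1[of y x D] False assms(1) by simp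
  moreover have "exp (-y) \<ge> exp (-x)" using False by simp
  ultimately show ?thesis using False by (simp add: abs_if)
qed

lemma sq_split: "(a - s)^2 + (b - s)^2 = (a - b)^2 / 2 + 2 * ((a + b)/2 - s)^2" for a b s :: real
  by (simp add: power2_eq_square field_simps)

lemma aux1: assumes "(a::real) + b = c/2 + 2*e" "0 \<le> e" shows "c/8 \<le> (a+b)/4"
proof -
  have "(a+b)/4 = c/8 + e/2" using assms(1) by simp
  thus ?thesis using assms(2) by simp
qed
lemma aux2: "(a::real)/4 \<le> x \<Longrightarrow> b/4 \<le> y \<Longrightarrow> (a+b)/4 \<le> x + y" by simp

lemma spread:
  assumes k: "k \<ge> 2" and z: "z \<in> PiSet k" and D: "\<And>j. j \<in> {1..<k} \<Longrightarrow> \<bar>z j - zcr k j\<bar> \<le> D"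
  shows "exp (- Lk k) * exp (-D) / (sqrt 8 * sqrt (real k - 1)) * vnorm k (\<lambda>j. z j - zcr k j)
           \<le> vnorm k (\<lambda>j. exp (- z j) - s * sigma k j)"
proof -
  define I where "I = {1..<k}"
  define \<zeta> where "\<zeta> j = z j - zcr k j" for j
  define \<mu> where "\<mu> = exp (- Lk k)"
  define c where "c = \<mu> * exp (-D) / sqrt 8"
  have \<mu>: "\<mu> > 0" by (simp add: \<mu>_def)
  have c: "c > 0" by (simp add: c_def \<mu>)
  have finI: "finite I" and neI: "I \<noteq> {}" using k by (auto simp: I_def)
  have sumz: "(\<Sum>j\<in>I. sigma k j * \<zeta> j) = 0"
  proof -
    have "(\<Sum>j\<in>I. sigma k j * \<zeta> j) = vinner k (sigma k) z - vinner k (sigma k) (zcr k)"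
      by (simp add: vinner_def I_def \<zeta>_def algebra_simps sum_subtractf)
    thus ?thesis using z zcr_in[OF k] by (simp add: PiSet_def)
  qed
  define M where "M = Max ((\<lambda>j. \<bar>\<zeta> j\<bar>) ` I)"
  have "M \<in> (\<lambda>j. \<bar>\<zeta> j\<bar>) ` I" unfolding M_def using finI neI by (intro Max_in) auto
  then obtain p where p: "p \<in> I" "M = \<bar>\<zeta> p\<bar>" by auto
  have pmax: "\<bar>\<zeta> j\<bar> \<le> \<bar>\<zeta> p\<bar>" if "j \<in> I" for j
    using that finI p unfolding M_def by (metis (no_types, lifting) Max_ge finite_imageI imageI)
  have nz: "vnorm k \<zeta> \<le> sqrt (real k - 1) * \<bar>\<zeta> p\<bar>"
    by (rule vnorm_le) (use pmax k in \<open>auto simp: I_def\<close>)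
  have sk: "sqrt (real k - 1) > 0" using k by simp
  have key: "c * \<bar>\<zeta> p\<bar> \<le> vnorm k (\<lambda>j. exp (- z j) - s * sigma k j)"
  proof (cases "\<zeta> p = 0")
    case True thus ?thesis using c by (simp add: vnorm_nonneg)
  next
    case False
    have "\<exists>q\<in>I. \<zeta> q * \<zeta> p \<le> 0"
    proof (rule ccontr)
      assume nq: "\<not> (\<exists>q\<in>I. \<zeta> q * \<zeta> p \<le> 0)"
      have pos: "sigma k q * (\<zeta> q * \<zeta> p) > 0" if qI: "q \<in> I" for q
      proof -
        have "\<zeta> q * \<zeta> p > 0" using nq qI by (meson not_le)
        moreover have "sigma k q > 0" using sigma_ge[of q k] qI unfolding I_def by linarith
        ultimately show ?thesis by (rule mult_pos_pos[rotated])
      qed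
      have "(\<Sum>q\<in>I. sigma k q * (\<zeta> q * \<zeta> p)) > 0"
        by (rule sum_pos[OF finI neI pos])
      moreover have "(\<Sum>q\<in>I. sigma k q * (\<zeta> q * \<zeta> p)) = (\<Sum>j\<in>I. sigma k j * \<zeta> j) * \<zeta> p"
        by (simp add: sum_distrib_right mult.assoc)
      ultimately show False using sumz by (metis mult_zero_left less_irrefl)
    qed
    then obtain q where q: "q \<in> I" "\<zeta> q * \<zeta> p \<le> 0" by blast
    have h: "(\<zeta> p - \<zeta> q)^2 = (\<zeta> p)^2 - 2*(\<zeta> q * \<zeta> p) + (\<zeta> q)^2"
      by (simp add: power2_eq_square algebra_simps)
    have "(\<zeta> p)^2 \<le> (\<zeta> p - \<zeta> q)^2" using h q(2) zero_le_power2[of "\<zeta> q"] by linarith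
    then have pq: "\<bar>\<zeta> p\<bar> \<le> \<bar>\<zeta> p - \<zeta> q\<bar>" by (metis real_sqrt_le_mono real_sqrt_abs)
    have qp: "q \<noteq> p"
    proof
      assume "q = p"
      then have "\<zeta> p * \<zeta> p \<le> 0" using q(2) by simp
      then have "\<zeta> p * \<zeta> p = 0" using zero_le_square[of "\<zeta> p"] by linarith
      thus False using False by simp
    qed
    define g where "g j = exp (- \<zeta> j)" for j
    have gd: "exp (-D) * \<bar>\<zeta> p - \<zeta> q\<bar> \<le> \<bar>g p - g q\<bar>"
      unfolding g_def by (rule expdiff) (use D p q in \<open>auto simp: I_def \<zeta>_def\<close>)
    have w: "exp (- z j) - s * sigma k j = sigma k j * (\<mu> * g j - s)" if "j \<in> I" for j
      using exp_decomp[of j k z] that by (simp add: I_def g_def \<zeta>_def \<mu>_def algebra_simps)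
    have sq4: "(\<mu> * g j - s)^2 / 4 \<le> (exp (- z j) - s * sigma k j)^2" if "j \<in> I" for j
    proof -
      have "sigma k j \<ge> 1/2" using sigma_ge that by (simp add: I_def)
      then have "(1/2)^2 \<le> (sigma k j)^2" by (intro power_mono) auto
      then have "(1/2)^2 * (\<mu> * g j - s)^2 \<le> (sigma k j)^2 * (\<mu> * g j - s)^2"
        by (intro mult_right_mono) auto
      moreover have "(exp (- z j) - s * sigma k j)^2 = (sigma k j)^2 * (\<mu> * g j - s)^2"
        using w[OF that] by (simp add: power_mult_distrib)
      ultimately show ?thesis by (simp add: power_divide)
    qed
    have "(c * \<bar>\<zeta> p\<bar>)^2 = (\<mu>^2 / 8) * (exp (-D) * \<bar>\<zeta> p\<bar>)^2"
      by (simp add: c_def power_mult_distrib power_divide)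
    also have "\<dots> \<le> (\<mu>^2 / 8) * (g p - g q)^2"
    proof -
      have "exp (-D) * \<bar>\<zeta> p\<bar> \<le> \<bar>g p - g q\<bar>"
      proof -
        have "exp (-D) * \<bar>\<zeta> p\<bar> \<le> exp (-D) * \<bar>\<zeta> p - \<zeta> q\<bar>" using pq by (intro mult_left_mono) auto
        thus ?thesis using gd by linarith
      qed
      then have "(exp (-D) * \<bar>\<zeta> p\<bar>)^2 \<le> \<bar>g p - g q\<bar>^2" by (intro power_mono) auto
      thus ?thesis by (intro mult_left_mono) auto
    qed
    also have "\<dots> = (\<mu> * (g p - g q))^2 / 8"
      by (simp add: power_mult_distrib)
    also have "\<dots> = (\<mu> * g p - \<mu> * g q)^2 / 8"
      by (simp only: right_diff_distrib)
    also have "\<dots> \<le> ((\<mu> * g p - s)^2 + (\<mu> * g q - s)^2) / 4"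
      by (rule aux1[OF sq_split[of "\<mu> * g p" s "\<mu> * g q"] zero_le_power2])
    also have "\<dots> \<le> (exp (- z p) - s * sigma k p)^2 + (exp (- z q) - s * sigma k q)^2"
      by (rule aux2[OF sq4[OF p(1)] sq4[OF q(1)]])
    also have "\<dots> = (\<Sum>j\<in>{p,q}. (exp (- z j) - s * sigma k j)^2)"
      using qp by simp
    also have "\<dots> \<le> (\<Sum>j\<in>I. (exp (- z j) - s * sigma k j)^2)"
      by (rule sum_mono2) (use finI p q in auto)
    also have "\<dots> = (vnorm k (\<lambda>j. exp (- z j) - s * sigma k j))^2"
      by (simp add: vnorm_sq I_def)
    finally show ?thesis by (rule power2_le_imp_le) (simp add: vnorm_nonneg)
  qed
  have "exp (- Lk k) * exp (-D) / (sqrt 8 * sqrt (real k - 1)) * vnorm k \<zeta> = c * (vnorm k \<zeta> / sqrt (real k - 1))"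
    by (simp add: c_def \<mu>_def)
  also have "\<dots> \<le> c * \<bar>\<zeta> p\<bar>"
  proof -
    have "vnorm k \<zeta> / sqrt (real k - 1) \<le> \<bar>\<zeta> p\<bar>" using nz sk by (simp add: pos_divide_le_eq mult.commute)
    thus ?thesis using c by (intro mult_left_mono) auto
  qed
  also have "\<dots> \<le> vnorm k (\<lambda>j. exp (- z j) - s * sigma k j)" by (rule key)
  moreover have "(\<lambda>j. z j - zcr k j) = \<zeta>" by (rule ext) (simp add: \<zeta>_def)
  ultimately show ?thesis by simp
qed



lemma comb:
  fixes \<kappa> B W F a c :: real
  assumes "0<\<kappa>" "0<B" "0<W" "F \<ge> \<kappa>*a - W*c + B*c" "F \<ge> B*c" "a\<ge>0" "c\<ge>0"
  shows "min (B/(2*(W+B))*\<kappa>) (B/2) * (a + c) \<le> F"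
proof -
  define l where "l = B/(2*(W+B))"
  have l0: "0 < l" using assms by (simp add: l_def)
  have l1: "l \<le> 1" using assms by (simp add: l_def field_simps)
  have lW: "2 * (l * W) \<le> B" using assms by (simp add: l_def field_simps)
  have f1: "l * (\<kappa>*a - W*c + B*c) \<le> l * F" using assms l0 by (intro mult_left_mono) auto
  have f2: "(1 - l) * (B*c) \<le> (1-l) * F" using assms l1 by (intro mult_left_mono) auto
  have e: "l * (\<kappa>*a - W*c + B*c) + (1 - l) * (B*c) = (l*\<kappa>)*a + B*c - (l*W)*c"
    by (simp add: algebra_simps)
  have g: "2*((l*W)*c) \<le> B * c" using lW assms by (metis mult.assoc mult_right_mono)
  define m where "m = min (l*\<kappa>) (B/2)"
  have m1: "m * a \<le> (l*\<kappa>)*a" using assms by (intro mult_right_mono) (auto simp: m_def)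
  have m2: "2 * (m * c) \<le> B*c" using assms
    by (metis m_def min.cobounded2 mult.assoc mult_right_mono le_divide_eq_numeral1(1) mult.commute)
  have "m * (a + c) \<le> F"
    using f1 f2 e g m1 m2 by (simp add: algebra_simps) 
  thus ?thesis by (simp add: m_def l_def)
qed

lemma cos_lip: fixes x :: real assumes "\<bar>x\<bar> \<le> 1" shows "\<bar>cos x - 1\<bar> \<le> \<bar>x\<bar>"
proof -
  have c: "cos x = 1 - 2 * (sin (x/2))^2" using cos_double_sin[of "x/2"] by simp
  have "\<bar>sin (x/2)\<bar> \<le> \<bar>x/2\<bar>" by (rule abs_sin_x_le_abs_x)
  then have "\<bar>sin (x/2)\<bar>^2 \<le> \<bar>x/2\<bar>^2" by (rule power_mono) simp
  then have s: "(sin (x/2))^2 \<le> (x/2)^2" by (simp only: power2_abs)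
  have h: "\<bar>x\<bar> * \<bar>x\<bar> \<le> \<bar>x\<bar> * 1" using assms by (intro mult_left_mono) auto
  have e: "(x/2)^2 = (\<bar>x\<bar> * \<bar>x\<bar>) / 4" by (simp add: power2_eq_square)
  have "1 - cos x \<le> \<bar>x\<bar>" using c s h e by linarith
  moreover have "cos x \<le> 1" by simp
  ultimately show ?thesis unfolding abs_le_iff by linarith
qed

definition muk :: "nat \<Rightarrow> real" where "muk k = exp (- Lk k)"
definition kap :: "nat \<Rightarrow> real \<Rightarrow> real" where "kap k D = muk k * exp (-D) / (sqrt 8 * sqrt (real k - 1))"
definition Bk :: "nat \<Rightarrow> real" where "Bk k = muk k * (1/6) * exp (-1)"
definition Wk :: "nat \<Rightarrow> real" where "Wk k = muk k * (real k)^2 * exp 1"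
definition dii :: "nat \<Rightarrow> real" where
  "dii k = min (Bk k/(2*(Wk k + Bk k)) * kap k 1) (Bk k/2)"

lemma sigma_nonneg: "j \<in> {1..<k} \<Longrightarrow> 0 \<le> sigma k j" using sigma_ge[of j k] by linarith

lemma muk_pos: "muk k > 0" by (simp add: muk_def)
lemma kap_pos: "k \<ge> 2 \<Longrightarrow> kap k D > 0" by (simp add: kap_def muk_pos)
lemma Bk_pos: "Bk k > 0" by (simp add: Bk_def muk_pos)
lemma Wk_pos: "k \<ge> 2 \<Longrightarrow> Wk k > 0" by (simp add: Wk_def muk_pos)
lemma dii_pos: assumes "k \<ge> 2" shows "dii k > 0"
proof -
  have a: "kap k 1 > 0" using kap_pos[OF assms] .
  have b: "Bk k > 0" by (rule Bk_pos)
  have c: "Wk k > 0" using Wk_pos[OF assms] .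
  have "Bk k/(2*(Wk k + Bk k)) > 0" using b c by simp
  then have "Bk k/(2*(Wk k + Bk k)) * kap k 1 > 0" using a by (rule mult_pos_pos)
  thus ?thesis using b by (simp add: dii_def)
qed

lemma vnorm_neg: "vnorm k (\<lambda>j. - v j) = vnorm k v"
  by (simp add: vnorm_L2 L2_set_def)

lemma Peq: "Psigma k v = (\<lambda>j. v j - (vinner k (sigma k) v / (vnorm k (sigma k))\<^sup>2) * sigma k j)"
  by (simp add: Psigma_def)

lemma partii:
  assumes k: "k \<ge> 2" and z: "z \<in> PiSet k"
    and small: "vnorm k (\<lambda>j. z j - zcr k j) + vnorm k (\<lambda>j. b j - pi) \<le> 1"
  shows "dii k * (vnorm k (\<lambda>j. z j - zcr k j) + vnorm k (\<lambda>j. b j - pi)) \<le> Fq k z b"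
proof -
  define nz where "nz = vnorm k (\<lambda>j. z j - zcr k j)"
  define nb where "nb = vnorm k (\<lambda>j. b j - pi)"
  have nz0: "nz \<ge> 0" and nb0: "nb \<ge> 0" by (simp_all add: nz_def nb_def vnorm_nonneg)
  have zb: "\<bar>z j - zcr k j\<bar> \<le> 1" if j: "j \<in> {1..<k}" for j
    using vnorm_comp[OF j, of "\<lambda>j. z j - zcr k j"] small nb0 unfolding nz_def nb_def by linarith
  have bb: "\<bar>b j - pi\<bar> \<le> 1" if j: "j \<in> {1..<k}" for j
    using vnorm_comp[OF j, of "\<lambda>j. b j - pi"] small nz0 unfolding nz_def nb_def by linarith
  define w where "w j = exp (- z j)" for j
  have wd: "w j = muk k * sigma k j * exp (- (z j - zcr k j))" if "j \<in> {1..<k}" for j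
    using exp_decomp[OF that, of z] by (simp add: w_def muk_def)
  have wlo: "muk k * (1/2) * exp (-1) \<le> w j" if j: "j \<in> {1..<k}" for j
  proof -
    have h2: "exp (-1) \<le> exp (- (z j - zcr k j))" using zb[OF j] by simp
    have h1: "muk k * (1/2) \<le> muk k * sigma k j" using sigma_ge[OF j] muk_pos[of k]
      by (intro mult_left_mono) auto
    have h3: "0 \<le> muk k * sigma k j" using muk_pos[of k] sigma_nonneg[OF j] by simp
    have "(muk k * (1/2)) * exp (-1) \<le> (muk k * sigma k j) * exp (- (z j - zcr k j))"
      by (rule mult_mono[OF h1 h2 h3]) simp
    thus ?thesis using wd[OF j] by simp
  qed
  have wpos: "w j > 0" for j by (simp add: w_def)
  have whi: "w j \<le> Wk k" if j: "j \<in> {1..<k}" for j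
  proof -
    have h2: "exp (- (z j - zcr k j)) \<le> exp 1" using zb[OF j] by simp
    have h1: "muk k * sigma k j \<le> muk k * (real k)^2" using sigma_le[OF j] muk_pos[of k]
      by (intro mult_left_mono) auto
    have h3: "0 \<le> muk k * (real k)^2" using muk_pos[of k] by simp
    have "(muk k * sigma k j) * exp (- (z j - zcr k j)) \<le> (muk k * (real k)^2) * exp 1"
      by (rule mult_mono[OF h1 h2 h3]) simp
    thus ?thesis using wd[OF j] by (simp add: Wk_def)
  qed
  have S: "Bk k * nb \<le> vnorm k (\<lambda>j. sin (b j) * w j)"
  proof -
    have "vnorm k (\<lambda>j. Bk k * (b j - pi)) \<le> vnorm k (\<lambda>j. sin (b j) * w j)"
    proof (rule vnorm_mono)
      fix j assume j: "j \<in> {1..<k}"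
      have sd: "sin (b j - pi) = - sin (b j)" by (simp add: sin_diff)
      have s3: "\<bar>b j - pi\<bar> / 3 \<le> \<bar>sin (b j)\<bar>" using sin_lower[OF bb[OF j]] sd by simp
      have "\<bar>Bk k * (b j - pi)\<bar> = Bk k * \<bar>b j - pi\<bar>" using Bk_pos[of k] by (simp add: abs_mult)
      also have "\<dots> = (\<bar>b j - pi\<bar> / 3) * (muk k * (1/2) * exp (-1))"
        by (simp add: Bk_def)
      also have "\<dots> \<le> \<bar>sin (b j)\<bar> * w j"
        using s3 wlo[OF j] muk_pos[of k] by (intro mult_mono) auto
      also have "\<dots> = \<bar>sin (b j) * w j\<bar>" using wpos[of j] by (simp add: abs_mult)
      finally show "\<bar>Bk k * (b j - pi)\<bar> \<le> \<bar>sin (b j) * w j\<bar>" .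
    qed
    thus ?thesis using Bk_pos[of k] by (simp add: vnorm_scale nb_def)
  qed
  define T where "T = vinner k (sigma k) (\<lambda>j. cos (b j) * w j) / (vnorm k (sigma k))\<^sup>2"
  define P where "P = vnorm k (\<lambda>j. cos (b j) * w j - T * sigma k j)"
  have FqP: "Fq k z b = P + vnorm k (\<lambda>j. sin (b j) * w j)"
    unfolding Fq_def P_def T_def w_def Peq by simp
  have sp: "kap k 1 * nz \<le> vnorm k (\<lambda>j. exp (- z j) - (-T) * sigma k j)"
    using spread[OF k z, of 1 "-T"] zb unfolding kap_def muk_def nz_def by blast
  have eqf: "(\<lambda>j. exp (- z j) - (-T) * sigma k j) = (\<lambda>j. - (cos (b j) * w j - T * sigma k j) + (cos (b j) + 1) * w j)"
    by (rule ext) (simp add: w_def algebra_simps)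
  have tri: "vnorm k (\<lambda>j. exp (- z j) - (-T) * sigma k j) \<le> P + vnorm k (\<lambda>j. (cos (b j) + 1) * w j)"
    unfolding eqf P_def
    using vnorm_tri[of k "\<lambda>j. - (cos (b j) * w j - T * sigma k j)" "\<lambda>j. (cos (b j) + 1) * w j"]
    by (simp only: vnorm_neg)
  have cw: "vnorm k (\<lambda>j. (cos (b j) + 1) * w j) \<le> Wk k * nb"
  proof -
    have "vnorm k (\<lambda>j. (cos (b j) + 1) * w j) \<le> vnorm k (\<lambda>j. Wk k * (b j - pi))"
    proof (rule vnorm_mono)
      fix j assume j: "j \<in> {1..<k}"
      have cd: "cos (b j - pi) = - cos (b j)" by (simp add: cos_diff)
      have c1: "\<bar>cos (b j) + 1\<bar> \<le> \<bar>b j - pi\<bar>"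
        using cos_lip[OF bb[OF j]] cd by (simp add: abs_minus_commute)
      have "\<bar>(cos (b j) + 1) * w j\<bar> = \<bar>cos (b j) + 1\<bar> * w j" using wpos[of j] by (simp add: abs_mult)
      also have "\<dots> \<le> \<bar>b j - pi\<bar> * Wk k" using c1 whi[OF j] wpos[of j] by (intro mult_mono) auto
      also have "\<dots> = \<bar>Wk k * (b j - pi)\<bar>" using Wk_pos[OF k] by (simp add: abs_mult)
      finally show "\<bar>(cos (b j) + 1) * w j\<bar> \<le> \<bar>Wk k * (b j - pi)\<bar>" .
    qed
    thus ?thesis using Wk_pos[OF k] by (simp add: vnorm_scale nb_def)
  qed
  have F1: "Fq k z b \<ge> kap k 1 * nz - Wk k * nb + Bk k * nb"
    using FqP sp tri cw S by linarith
  have F2: "Fq k z b \<ge> Bk k * nb"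
    using FqP S by (simp add: P_def vnorm_nonneg add_increasing)
  have "min (Bk k/(2*(Wk k + Bk k)) * kap k 1) (Bk k/2) * (nz + nb) \<le> Fq k z b"
    by (rule comb[OF kap_pos[OF k] Bk_pos Wk_pos[OF k] F1 F2 nz0 nb0])
  thus ?thesis by (simp add: dii_def nz_def nb_def)
qed



lemma sign_aux:
  fixes c w T s dd :: real
  assumes A1: "\<bar>c * w - T * s\<bar> \<le> dd" and A2: "dd < \<bar>c\<bar> * w" and w: "w>0" and s: "s>0"
  shows sign_pos: "T > 0 \<Longrightarrow> c > 0" and sign_neg: "T \<le> 0 \<Longrightarrow> c < 0"
proof -
  have u: "c * w - T * s \<le> dd" using A1 by (rule abs_le_D1)
  have l: "-(c * w - T * s) \<le> dd" using A1 by (rule abs_le_D2)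
  show "c > 0" if T: "T>0"
  proof (rule ccontr)
    assume "\<not> c > 0" then have c0: "c \<le> 0" by simp
    have ts: "T * s > 0" using T s by simp
    have cw: "c * w \<le> 0" using c0 w by (simp add: mult_nonpos_nonneg)
    have "\<bar>c\<bar> * w = -(c * w)" using c0 by simp
    then show False using l A2 ts cw by linarith
  qed
  show "c < 0" if T: "T \<le> 0"
  proof (rule ccontr)
    assume "\<not> c < 0" then have c0: "c \<ge> 0" by simp
    have ts: "T * s \<le> 0" using T s by (simp add: mult_nonpos_nonneg)
    have cw: "c * w \<ge> 0" using c0 w by simp
    have "\<bar>c\<bar> * w = c * w" using c0 by simp
    then show False using u A2 ts cw by linarith
  qed
qed

lemma Fq_nonneg: "Fq k z b \<ge> 0"
  by (simp add: Fq_def vnorm_nonneg add_nonneg_nonneg)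

lemma parti:
  assumes k: "k \<ge> 2" and R: "R > 0" and \<epsilon>: "\<epsilon> > 0"
  shows "\<exists>\<eta>>0. \<forall>z b. z \<in> PiSet k \<longrightarrow> vnorm k z \<le> R \<longrightarrow>
               vnorm k (\<lambda>j. z j - zcr k j)
                 + min (vnorm k (\<lambda>j. cos (b j) - 1)) (vnorm k (\<lambda>j. cos (b j) + 1)) \<ge> \<epsilon> \<longrightarrow>
               Fq k z b \<ge> \<eta>"
proof -
  define a where "a = exp (-R)"
  define A where "A = exp R"
  define D where "D = R + vnorm k (zcr k)"
  define q where "q = sqrt (real k - 1)"
  define \<kappa> where "\<kappa> = kap k D"
  define K where "K = q * ((1 + A/a^2)/\<kappa> + 1/a^2)"
  have a0: "a > 0" by (simp add: a_def)
  have a1: "a \<le> 1" using R by (simp add: a_def)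
  have A0: "A > 0" by (simp add: A_def)
  have q0: "q > 0" using k by (simp add: q_def)
  have \<kappa>0: "\<kappa> > 0" using kap_pos[OF k] by (simp add: \<kappa>_def)
  have K0: "K > 0" unfolding K_def using q0 \<kappa>0 a0 A0 by (intro mult_pos_pos add_pos_pos divide_pos_pos) auto
  define \<eta> where "\<eta> = min (a/4) (\<epsilon>/(2*K))"
  have \<eta>0: "\<eta> > 0" using a0 K0 \<epsilon> by (simp add: \<eta>_def)
  show ?thesis
  proof (intro exI[of _ \<eta>] conjI allI impI)
    show "\<eta> > 0" by (rule \<eta>0)
    fix z b
    assume z: "z \<in> PiSet k" and zR: "vnorm k z \<le> R"
      and big: "\<epsilon> \<le> vnorm k (\<lambda>j. z j - zcr k j) + min (vnorm k (\<lambda>j. cos (b j) - 1)) (vnorm k (\<lambda>j. cos (b j) + 1))"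
    define nz where "nz = vnorm k (\<lambda>j. z j - zcr k j)"
    define mn where "mn = min (vnorm k (\<lambda>j. cos (b j) - 1)) (vnorm k (\<lambda>j. cos (b j) + 1))"
    show "\<eta> \<le> Fq k z b"
    proof (rule ccontr)
      assume "\<not> \<eta> \<le> Fq k z b"
      define \<delta> where "\<delta> = Fq k z b"
      have \<delta>\<eta>: "\<delta> < \<eta>" using \<open>\<not> \<eta> \<le> Fq k z b\<close> by (simp add: \<delta>_def)
      have \<delta>0: "\<delta> \<ge> 0" by (simp add: \<delta>_def Fq_nonneg)
      have \<delta>a: "\<delta> < a/4" using \<delta>\<eta> by (simp add: \<eta>_def)
      have \<delta>K: "\<delta> < \<epsilon>/(2*K)" using \<delta>\<eta> by (simp add: \<eta>_def)
      have \<delta>1: "\<delta> \<le> 1" using \<delta>a a1 by simp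
      define w where "w j = exp (- z j)" for j
      have wpos: "w j > 0" for j by (simp add: w_def)
      have zj: "\<bar>z j\<bar> \<le> R" if j: "j \<in> {1..<k}" for j
        using vnorm_comp[OF j, of z] zR by linarith
      have wlo: "a \<le> w j" if j: "j \<in> {1..<k}" for j
        using zj[OF j] by (simp add: a_def w_def)
      have whi: "w j \<le> A" if j: "j \<in> {1..<k}" for j
        using zj[OF j] by (simp add: A_def w_def)
      define T where "T = vinner k (sigma k) (\<lambda>j. cos (b j) * w j) / (vnorm k (sigma k))\<^sup>2"
      have FqP: "\<delta> = vnorm k (\<lambda>j. cos (b j) * w j - T * sigma k j) + vnorm k (\<lambda>j. sin (b j) * w j)"
        unfolding \<delta>_def Fq_def T_def w_def Peq by simp
      have Pj: "\<bar>cos (b j) * w j - T * sigma k j\<bar> \<le> \<delta>" if j: "j \<in> {1..<k}" for j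
        using vnorm_comp[OF j, of "\<lambda>j. cos (b j) * w j - T * sigma k j"] FqP
          vnorm_nonneg[of k "\<lambda>j. sin (b j) * w j"] by linarith
      have Sj: "\<bar>sin (b j)\<bar> * w j \<le> \<delta>" if j: "j \<in> {1..<k}" for j
      proof -
        have "\<bar>sin (b j) * w j\<bar> \<le> \<delta>"
          using vnorm_comp[OF j, of "\<lambda>j. sin (b j) * w j"] FqP
            vnorm_nonneg[of k "\<lambda>j. cos (b j) * w j - T * sigma k j"] by linarith
        thus ?thesis using wpos[of j] by (simp add: abs_mult)
      qed
      define \<rho> where "\<rho> = (\<delta>/a)^2"
      have \<rho>0: "\<rho> \<ge> 0" by (simp add: \<rho>_def)
      have sinb: "\<bar>sin (b j)\<bar> \<le> \<delta>/a" if j: "j \<in> {1..<k}" for j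
      proof -
        have "\<bar>sin (b j)\<bar> * a \<le> \<bar>sin (b j)\<bar> * w j" using wlo[OF j] by (intro mult_left_mono) auto
        then have "\<bar>sin (b j)\<bar> * a \<le> \<delta>" using Sj[OF j] by linarith
        thus ?thesis using a0 by (simp add: pos_le_divide_eq)
      qed
      have crho: "1 - \<bar>cos (b j)\<bar> \<le> \<rho>" if j: "j \<in> {1..<k}" for j
      proof -
        have "\<bar>sin (b j)\<bar>^2 \<le> (\<delta>/a)^2" using sinb[OF j] by (intro power_mono) auto
        then have s2: "(sin (b j))^2 \<le> \<rho>" by (simp add: \<rho>_def)
        have sc: "(sin (b j))^2 + (cos (b j))^2 = 1" by (rule sin_cos_squared_add)
        have "\<bar>cos (b j)\<bar> * \<bar>cos (b j)\<bar> \<le> \<bar>cos (b j)\<bar> * 1" by (intro mult_left_mono) auto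
        moreover have "(cos (b j))^2 = \<bar>cos (b j)\<bar> * \<bar>cos (b j)\<bar>" by (simp add: power2_eq_square)
        ultimately show ?thesis using s2 sc by linarith
      qed
      have \<rho>s: "\<rho> \<le> 1/4"
      proof -
        have "\<delta>/a \<le> 1/4" using \<delta>a a0 by (simp add: divide_le_eq)
        then have "(\<delta>/a)^2 \<le> (1/4)^2" using \<delta>0 a0 by (intro power_mono) auto
        moreover have "(1/4::real)^2 \<le> 1/4" by (simp add: power2_eq_square)
        ultimately show ?thesis unfolding \<rho>_def by (rule order_trans)
      qed
      have \<rho>d: "\<rho> \<le> \<delta>/a^2"
      proof -
        have "\<delta> * \<delta> \<le> \<delta> * 1" using \<delta>0 \<delta>1 by (intro mult_left_mono) auto
        then have "\<delta> * \<delta> / a^2 \<le> \<delta> / a^2" using a0 by (simp add: divide_right_mono)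
        thus ?thesis by (simp add: \<rho>_def power_divide power2_eq_square)
      qed
      have cbig: "\<delta> < \<bar>cos (b j)\<bar> * w j" if j: "j \<in> {1..<k}" for j
      proof -
        have c2: "1/2 \<le> \<bar>cos (b j)\<bar>" using crho[OF j] \<rho>s by linarith
        have "(1/2) * a \<le> \<bar>cos (b j)\<bar> * w j" using c2 wlo[OF j] a0 by (intro mult_mono) auto
        thus ?thesis using \<delta>a a0 by linarith
      qed
      have sigp: "sigma k j > 0" if j: "j \<in> {1..<k}" for j using sigma_ge[OF j] by linarith
      have key: "\<exists>s. (\<forall>j\<in>{1..<k}. \<bar>w j - s * sigma k j\<bar> \<le> \<delta> + \<rho> * A) \<and> mn \<le> q * \<rho>"
      proof (cases "T > 0")
        case True
        have cpos: "cos (b j) > 0" if j: "j \<in> {1..<k}" for j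
          by (rule sign_pos[OF Pj[OF j] cbig[OF j] wpos sigp[OF j] True])
        show ?thesis
        proof (intro exI[of _ T] conjI ballI)
          fix j assume j: "j \<in> {1..<k}"
          have e: "w j - T * sigma k j = (cos (b j) * w j - T * sigma k j) + (1 - cos (b j)) * w j"
            by (simp add: algebra_simps)
          have "(1 - cos (b j)) * w j \<le> \<rho> * A"
            using crho[OF j] cpos[OF j] whi[OF j] wpos[of j] \<rho>0 by (intro mult_mono) auto
          moreover have "0 \<le> (1 - cos (b j)) * w j" using cos_le_one[of "b j"] wpos[of j] by simp
          ultimately show "\<bar>w j - T * sigma k j\<bar> \<le> \<delta> + \<rho> * A"
            using e Pj[OF j] by (auto simp: abs_le_iff)
        next
          have "vnorm k (\<lambda>j. cos (b j) - 1) \<le> q * \<rho>" unfolding q_def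
          proof (rule vnorm_le)
            fix j assume j: "j \<in> {1..<k}"
            show "\<bar>cos (b j) - 1\<bar> \<le> \<rho>" using crho[OF j] cpos[OF j] cos_le_one[of "b j"] by simp
          qed (use \<rho>0 k in auto)
          thus "mn \<le> q * \<rho>" by (simp add: mn_def)
        qed
      next
        case False
        then have T0: "T \<le> 0" by simp
        have cneg: "cos (b j) < 0" if j: "j \<in> {1..<k}" for j
          by (rule sign_neg[OF Pj[OF j] cbig[OF j] wpos sigp[OF j] T0])
        show ?thesis
        proof (intro exI[of _ "-T"] conjI ballI)
          fix j assume j: "j \<in> {1..<k}"
          have e: "w j - (-T) * sigma k j = - (cos (b j) * w j - T * sigma k j) + (1 + cos (b j)) * w j"
            by (simp add: algebra_simps)
          have "(1 + cos (b j)) * w j \<le> \<rho> * A"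
            using crho[OF j] cneg[OF j] whi[OF j] wpos[of j] \<rho>0 by (intro mult_mono) auto
          moreover have "0 \<le> (1 + cos (b j)) * w j"
          proof -
            have "0 \<le> 1 + cos (b j)" using cos_ge_minus_one[of "b j"] by linarith
            thus ?thesis using wpos[of j] by simp
          qed
          ultimately show "\<bar>w j - (-T) * sigma k j\<bar> \<le> \<delta> + \<rho> * A"
            using e Pj[OF j] by (auto simp: abs_le_iff)
        next
          have "vnorm k (\<lambda>j. cos (b j) + 1) \<le> q * \<rho>" unfolding q_def
          proof (rule vnorm_le)
            fix j assume j: "j \<in> {1..<k}"
            have "0 \<le> cos (b j) + 1" using cos_ge_minus_one[of "b j"] by linarith
            then show "\<bar>cos (b j) + 1\<bar> \<le> \<rho>" using crho[OF j] cneg[OF j] by simp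
          qed (use \<rho>0 k in auto)
          thus "mn \<le> q * \<rho>" by (simp add: mn_def)
        qed
      qed
      then obtain s where s1: "\<And>j. j \<in> {1..<k} \<Longrightarrow> \<bar>w j - s * sigma k j\<bar> \<le> \<delta> + \<rho> * A"
        and m: "mn \<le> q * \<rho>" by blast
      have vw: "vnorm k (\<lambda>j. w j - s * sigma k j) \<le> q * (\<delta> + \<rho> * A)" unfolding q_def
        by (rule vnorm_le) (use s1 \<delta>0 \<rho>0 A0 k in auto)
      have zD: "\<bar>z j - zcr k j\<bar> \<le> D" if j: "j \<in> {1..<k}" for j
      proof -
        have "\<bar>z j - zcr k j\<bar> \<le> \<bar>z j\<bar> + \<bar>zcr k j\<bar>" by (rule abs_triangle_ineq4)
        thus ?thesis using zj[OF j] vnorm_comp[OF j, of "zcr k"] by (simp add: D_def)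
      qed
      have spz: "\<kappa> * nz \<le> vnorm k (\<lambda>j. w j - s * sigma k j)"
        using spread[OF k z, of D s] zD unfolding \<kappa>_def kap_def muk_def nz_def w_def by blast
      have h1: "\<kappa> * nz \<le> q * \<delta> + q * (\<rho> * A)" using spz vw by (simp add: distrib_left)
      have h2: "\<kappa> * mn \<le> \<kappa> * (q * \<rho>)" using m \<kappa>0 by (intro mult_left_mono) auto
      have h3: "q * (\<rho> * A) \<le> q * ((\<delta>/a^2) * A)" using \<rho>d A0 q0 by (intro mult_left_mono mult_right_mono) auto
      have h4: "\<kappa> * (q * \<rho>) \<le> \<kappa> * (q * (\<delta>/a^2))" using \<rho>d \<kappa>0 q0 by (intro mult_left_mono) auto
      have eK: "\<delta> * (\<kappa> * K) = q * \<delta> + q * ((\<delta>/a^2) * A) + \<kappa> * (q * (\<delta>/a^2))"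
        using \<kappa>0 a0 by (simp add: K_def field_simps)
      have "\<kappa> * nz + \<kappa> * mn \<le> \<delta> * (\<kappa> * K)" using h1 h2 h3 h4 eK by linarith
      then have "\<kappa> * (nz + mn) \<le> \<kappa> * (\<delta> * K)" by (simp add: algebra_simps)
      then have tot: "nz + mn \<le> \<delta> * K" using \<kappa>0 by simp
      have "\<delta> * (2 * K) < \<epsilon>" using \<delta>K K0 by (simp add: pos_less_divide_eq)
      moreover have "\<delta> * K \<le> \<delta> * (2 * K)" using \<delta>0 K0 by (intro mult_left_mono) auto
      ultimately show False using tot big unfolding nz_def mn_def by linarith
    qed
  qed
qed

theorem mainTheorem10:
  fixes k :: nat
  assumes "k \<ge> 2"
  shows "(\<forall>R>0. \<exists>\<epsilon>1>0. \<forall>\<epsilon>. 0 < \<epsilon> \<and> \<epsilon> < \<epsilon>1 \<longrightarrow>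
            (\<exists>\<eta>>0. \<forall>z b. z \<in> PiSet k \<longrightarrow> vnorm k z \<le> R \<longrightarrow>
               vnorm k (\<lambda>j. z j - zcr k j)
                 + min (vnorm k (\<lambda>j. cos (b j) - 1)) (vnorm k (\<lambda>j. cos (b j) + 1)) \<ge> \<epsilon> \<longrightarrow>
               Fq k z b \<ge> \<eta>))
       \<and> (\<exists>\<epsilon>0>0. \<exists>C>0. \<forall>z b. z \<in> PiSet k \<longrightarrow>
            vnorm k (\<lambda>j. z j - zcr k j) + vnorm k (\<lambda>j. b j - pi) \<le> \<epsilon>0 \<longrightarrow>
            Fq k z b \<ge> (1 / C) * (vnorm k (\<lambda>j. z j - zcr k j) + vnorm k (\<lambda>j. b j - pi)))"
proof (rule conjI)
  show "\<forall>R>0. \<exists>\<epsilon>1>0. \<forall>\<epsilon>. 0 < \<epsilon> \<and> \<epsilon> < \<epsilon>1 \<longrightarrow>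
            (\<exists>\<eta>>0. \<forall>z b. z \<in> PiSet k \<longrightarrow> vnorm k z \<le> R \<longrightarrow>
               vnorm k (\<lambda>j. z j - zcr k j)
                 + min (vnorm k (\<lambda>j. cos (b j) - 1)) (vnorm k (\<lambda>j. cos (b j) + 1)) \<ge> \<epsilon> \<longrightarrow>
               Fq k z b \<ge> \<eta>)"
  proof (intro allI impI)
    fix R :: real assume R: "R > 0"
    show "\<exists>\<epsilon>1>0. \<forall>\<epsilon>. 0 < \<epsilon> \<and> \<epsilon> < \<epsilon>1 \<longrightarrow>
            (\<exists>\<eta>>0. \<forall>z b. z \<in> PiSet k \<longrightarrow> vnorm k z \<le> R \<longrightarrow>
               vnorm k (\<lambda>j. z j - zcr k j)
                 + min (vnorm k (\<lambda>j. cos (b j) - 1)) (vnorm k (\<lambda>j. cos (b j) + 1)) \<ge> \<epsilon> \<longrightarrow>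
               Fq k z b \<ge> \<eta>)"
      using parti[OF assms R] by (intro exI[of _ 1]) auto
  qed
next
  have d: "dii k > 0" by (rule dii_pos[OF assms])
  show "\<exists>\<epsilon>0>0. \<exists>C>0. \<forall>z b. z \<in> PiSet k \<longrightarrow>
            vnorm k (\<lambda>j. z j - zcr k j) + vnorm k (\<lambda>j. b j - pi) \<le> \<epsilon>0 \<longrightarrow>
            Fq k z b \<ge> (1 / C) * (vnorm k (\<lambda>j. z j - zcr k j) + vnorm k (\<lambda>j. b j - pi))"
  proof -
    have main: "\<forall>z b. z \<in> PiSet k \<longrightarrow>
            vnorm k (\<lambda>j. z j - zcr k j) + vnorm k (\<lambda>j. b j - pi) \<le> 1 \<longrightarrow>
            Fq k z b \<ge> (1 / (1 / dii k)) * (vnorm k (\<lambda>j. z j - zcr k j) + vnorm k (\<lambda>j. b j - pi))"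
      using partii[OF assms] by simp
    have "1 / dii k > 0" using d by simp
    with main have "\<exists>C>0. \<forall>z b. z \<in> PiSet k \<longrightarrow>
            vnorm k (\<lambda>j. z j - zcr k j) + vnorm k (\<lambda>j. b j - pi) \<le> 1 \<longrightarrow>
            Fq k z b \<ge> (1 / C) * (vnorm k (\<lambda>j. z j - zcr k j) + vnorm k (\<lambda>j. b j - pi))" by blast
    then show ?thesis using zero_less_one by blast
  qed
qed

end
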